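(* Let $U_1,\dots,U_d$ be left-orthogonal TT cores with left interface matrices $X_{\le k}$, and let $\delta V_1,\dots,\delta V_d$ be cores of the same sizes satisfying $(\delta V_k^L)^\top U_k^L=0$ for all $k\in[d-1]$, with variational interface matrices $V_{\le k}$. Then $V_{\le k}^\top X_{\le k}=0$ for all $k\in[d-1]$.
   Context: Fix $d\ge2$, positive integers $n_1,\dots,n_d$, $r_0=r_d=1$, $r_1,\dots,r_{d-1}\ge1$. Cores $U_k,\delta V_k\in\mathbb R^{r_{k-1}\times n_k\times r_k}$. For $U\in\mathbb R^{a\times n\times b}$, $U^L\in\mathbb R^{an\times b}$ has entry $U(\alpha,i,\beta)$ at row $\alpha+(i-1)a$, column $\beta$. Left-orthogonal: $(U_k^L)^\top U_k^L=I_{r_k}$ for $k\in[d-1]$. Interface matrices: $X_{\le0}=1$, $X_{\le k}=(I_{n_k}\otimes X_{\le k-1})U_k^L$. Variational interface matrices: $V_{\le0}=0$, $V_{\le k}=(I_{n_k}\otimes V_{\le k-1})U_k^L+(I_{n_k}\otimes X_{\le k-1})\delta V_k^L$. *)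

theory Defs
  imports "Jordan_Normal_Form.Matrix"
begin

text \<open>Conventions: indices are 0-based. A TT core of size a x n x b is a function
  C :: nat => nat => nat => real, with C alpha i beta meaningful for alpha < a, i < n, beta < b.
  The family of cores is indexed by k = 1..d; ranks r :: nat => nat, mode sizes n :: nat => nat.\<close>

type_synonym core = "nat \<Rightarrow> nat \<Rightarrow> nat \<Rightarrow> real"

definition unfold_L :: "nat \<Rightarrow> nat \<Rightarrow> nat \<Rightarrow> core \<Rightarrow> real mat" where
  "unfold_L a n b C = mat (a * n) b (\<lambda>(row, col). C (row mod a) (row div a) col)"

definition kron :: "real mat \<Rightarrow> real mat \<Rightarrow> real mat" where
  "kron A B = mat (dim_row A * dim_row B) (dim_col A * dim_col B)
     (\<lambda>(i, j). A $$ (i div dim_row B, j div dim_col B) * B $$ (i mod dim_row B, j mod dim_col B))"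

definition coreL :: "(nat \<Rightarrow> nat) \<Rightarrow> (nat \<Rightarrow> nat) \<Rightarrow> (nat \<Rightarrow> core) \<Rightarrow> nat \<Rightarrow> real mat" where
  "coreL n r U k = unfold_L (r (k - 1)) (n k) (r k) (U k)"

fun X_le :: "(nat \<Rightarrow> nat) \<Rightarrow> (nat \<Rightarrow> nat) \<Rightarrow> (nat \<Rightarrow> core) \<Rightarrow> nat \<Rightarrow> real mat" where
  "X_le n r U 0 = 1\<^sub>m 1"
| "X_le n r U (Suc k) = kron (1\<^sub>m (n (Suc k))) (X_le n r U k) * coreL n r U (Suc k)"

fun V_le :: "(nat \<Rightarrow> nat) \<Rightarrow> (nat \<Rightarrow> nat) \<Rightarrow> (nat \<Rightarrow> core) \<Rightarrow> (nat \<Rightarrow> core) \<Rightarrow> nat \<Rightarrow> real mat" where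
  "V_le n r U dV 0 = 0\<^sub>m 1 1"
| "V_le n r U dV (Suc k) =
     kron (1\<^sub>m (n (Suc k))) (V_le n r U dV k) * coreL n r U (Suc k)
   + kron (1\<^sub>m (n (Suc k))) (X_le n r U k) * coreL n r dV (Suc k)"

end

theory Submission
  imports Defs
begin

lemma sum_split_divmod:
  fixes g :: "nat \<Rightarrow> real"
  shows "(\<Sum>l<N*m. g l) = (\<Sum>c<N. \<Sum>t<m. g (c*m+t))"
proof (induction N)
  case 0 then show ?case by simp
next
  case (Suc N)
  have se: "{..<Suc N * m} = {..<N*m} \<union> {N*m..<N*m+m}" by auto
  have "(\<Sum>l<Suc N*m. g l) = sum g ({..<N*m} \<union> {N*m..<N*m+m})" by (simp only: se)
  also have "\<dots> = (\<Sum>l<N*m. g l) + (\<Sum>l\<in>{N*m..<N*m+m}. g l)"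
    by (rule sum.union_disjoint) auto
  finally have "(\<Sum>l<Suc N*m. g l) = (\<Sum>l<N*m. g l) + (\<Sum>l\<in>{N*m..<N*m+m}. g l)" .
  also have "(\<Sum>l\<in>{N*m..<N*m+m}. g l) = (\<Sum>t<m. g (N*m+t))"
  proof -
    have "(\<Sum>l\<in>{N*m..<N*m+m}. g l) = (\<Sum>t\<in>{0..<m}. g (t + N*m))"
      using sum.shift_bounds_nat_ivl[of g 0 "N*m" m] by (simp add: add.commute)
    then show ?thesis by (simp add: add.commute lessThan_atLeast0)
  qed
  finally show ?case using Suc by simp
qed

lemma kron_I_carrier: "A \<in> carrier_mat m p \<Longrightarrow> kron (1\<^sub>m N) A \<in> carrier_mat (N*m) (N*p)"
  by (simp add: kron_def)

lemma kron_I_tmult: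
  assumes A: "A \<in> carrier_mat m p" and B: "B \<in> carrier_mat m q"
  shows "transpose_mat (kron (1\<^sub>m N) A) * kron (1\<^sub>m N) B = kron (1\<^sub>m N) (transpose_mat A * B)"
proof (rule eq_matI)
  fix i j assume i: "i < dim_row (kron (1\<^sub>m N) (transpose_mat A * B))"
    and j: "j < dim_col (kron (1\<^sub>m N) (transpose_mat A * B))"
  from i j A B have ip: "i < N*p" and jq: "j < N*q" by (auto simp: kron_def)
  then have p0: "p > 0" and q0: "q > 0" by (auto intro!: Nat.gr0I)
  have idp: "i div p < N" using ip by (simp add: less_mult_imp_div_less mult.commute)
  have jdq: "j div q < N" using jq by (simp add: less_mult_imp_div_less mult.commute)
  have lhs: "(transpose_mat (kron (1\<^sub>m N) A) * kron (1\<^sub>m N) B) $$ (i,j)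
     = (\<Sum>l<N*m. (1\<^sub>m N $$ (l div m, i div p) * A $$ (l mod m, i mod p)) *
                 (1\<^sub>m N $$ (l div m, j div q) * B $$ (l mod m, j mod q)))"
    using A B ip jq by (simp add: kron_def scalar_prod_def lessThan_atLeast0 mult.commute)
  also have "\<dots> = (\<Sum>c<N. \<Sum>t<m. (1\<^sub>m N $$ (c, i div p) * A $$ (t, i mod p)) *
                 (1\<^sub>m N $$ (c, j div q) * B $$ (t, j mod q)))"
    by (subst sum_split_divmod) (auto intro!: sum.cong)
  also have "\<dots> = (\<Sum>c<N. if c = i div p \<and> c = j div q then (\<Sum>t<m. A $$ (t, i mod p) * B $$ (t, j mod q)) else 0)"
    using idp jdq by (intro sum.cong) auto
  also have "\<dots> = (if i div p = j div q then (\<Sum>t<m. A $$ (t, i mod p) * B $$ (t, j mod q)) else 0)"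
    using idp by (auto simp: sum.delta' cong: conj_cong)
  also have "\<dots> = kron (1\<^sub>m N) (transpose_mat A * B) $$ (i,j)"
    using A B ip jq p0 q0 idp jdq by (simp add: kron_def scalar_prod_def lessThan_atLeast0)
  finally show "(transpose_mat (kron (1\<^sub>m N) A) * kron (1\<^sub>m N) B) $$ (i,j) = kron (1\<^sub>m N) (transpose_mat A * B) $$ (i,j)" .
qed (use A B in \<open>auto simp: kron_def\<close>)

lemma kron_I_zero: "kron (1\<^sub>m N) (0\<^sub>m m p) = 0\<^sub>m (N*m) (N*p)"
proof (rule eq_matI)
  fix i j assume "i < dim_row (0\<^sub>m (N*m) (N*p) :: real mat)" "j < dim_col (0\<^sub>m (N*m) (N*p) :: real mat)"
  then have i: "i < N*m" and j: "j < N*p" by auto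
  then have "m > 0" "p > 0" by (auto intro!: Nat.gr0I)
  then show "kron (1\<^sub>m N) (0\<^sub>m m p) $$ (i, j) = 0\<^sub>m (N*m) (N*p) $$ (i, j)"
    using i j by (simp add: kron_def)
qed (auto simp: kron_def)

lemma kron_I_one: "kron (1\<^sub>m N) (1\<^sub>m m) = 1\<^sub>m (N*m)"
proof (rule eq_matI)
  fix i j assume "i < dim_row (1\<^sub>m (N*m) :: real mat)" "j < dim_col (1\<^sub>m (N*m) :: real mat)"
  then have i: "i < N*m" and j: "j < N*m" by auto
  then have m0: "m > 0" by (auto intro!: Nat.gr0I)
  have "(i div m = j div m \<and> i mod m = j mod m) = (i = j)"
    by (metis div_mod_decomp)
  moreover have "i div m < N" "j div m < N" using i j by (simp_all add: less_mult_imp_div_less mult.commute)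
  ultimately show "kron (1\<^sub>m N) (1\<^sub>m m) $$ (i, j) = 1\<^sub>m (N*m) $$ (i, j)"
    using i j m0 by (auto simp: kron_def)
qed (auto simp: kron_def)


lemma assoc3:
  fixes P Q R S :: "real mat"
  assumes "P \<in> carrier_mat a b" "Q \<in> carrier_mat b c" "R \<in> carrier_mat c e" "S \<in> carrier_mat e f"
  shows "P * Q * (R * S) = P * (Q * R) * S"
proof -
  have "P * Q * (R * S) = P * (Q * (R * S))" using assms by (meson assoc_mult_mat mult_carrier_mat)
  also have "\<dots> = P * ((Q * R) * S)" using assms by (simp add: assoc_mult_mat[of Q b c R e S f])
  also have "\<dots> = P * (Q * R) * S" using assms by (metis assoc_mult_mat mult_carrier_mat)
  finally show ?thesis .
qed

lemma coreL_carrier: "coreL n r U k \<in> carrier_mat (r (k-1) * n k) (r k)"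
  by (simp add: coreL_def unfold_L_def)

lemma dims:
  assumes "r 0 = 1"
  shows "X_le n r U k \<in> carrier_mat (dim_row (X_le n r U k)) (r k) \<and>
         V_le n r U dV k \<in> carrier_mat (dim_row (X_le n r U k)) (r k)"
proof (induction k)
  case 0 then show ?case using assms by simp
next
  case (Suc k)
  define N where "N = dim_row (X_le n r U k)"
  have X: "X_le n r U k \<in> carrier_mat N (r k)" and V: "V_le n r U dV k \<in> carrier_mat N (r k)"
    using Suc unfolding N_def by auto
  have K: "kron (1\<^sub>m (n (Suc k))) (X_le n r U k) \<in> carrier_mat (n (Suc k) * N) (n (Suc k) * r k)"
    by (rule kron_I_carrier[OF X])
  have KV: "kron (1\<^sub>m (n (Suc k))) (V_le n r U dV k) \<in> carrier_mat (n (Suc k) * N) (n (Suc k) * r k)"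
    by (rule kron_I_carrier[OF V])
  have C: "coreL n r U (Suc k) \<in> carrier_mat (n (Suc k) * r k) (r (Suc k))"
    "coreL n r dV (Suc k) \<in> carrier_mat (n (Suc k) * r k) (r (Suc k))"
    using coreL_carrier[of n r _ "Suc k"] by (simp_all add: mult.commute)
  have P1: "X_le n r U (Suc k) \<in> carrier_mat (n (Suc k) * N) (r (Suc k))"
    using mult_carrier_mat[OF K C(1)] by simp
  have P2: "V_le n r U dV (Suc k) \<in> carrier_mat (n (Suc k) * N) (r (Suc k))"
    using mult_carrier_mat[OF KV C(1)] mult_carrier_mat[OF K C(2)] by simp
  have "dim_row (X_le n r U (Suc k)) = n (Suc k) * N" using P1 by (metis carrier_matD(1))
  then show ?case using P1 P2 by simp
qed

theorem lemma18:
  fixes d :: nat and n r :: "nat \<Rightarrow> nat" and U dV :: "nat \<Rightarrow> core"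
  assumes "d \<ge> 2"
    and "\<And>k. 1 \<le> k \<Longrightarrow> k \<le> d \<Longrightarrow> n k \<ge> 1"
    and "r 0 = 1" and "r d = 1"
    and "\<And>k. 1 \<le> k \<Longrightarrow> k \<le> d - 1 \<Longrightarrow> r k \<ge> 1"
    and "\<And>k. 1 \<le> k \<Longrightarrow> k \<le> d - 1 \<Longrightarrow>
           transpose_mat (coreL n r U k) * coreL n r U k = 1\<^sub>m (r k)"
    and "\<And>k. 1 \<le> k \<Longrightarrow> k \<le> d - 1 \<Longrightarrow>
           transpose_mat (coreL n r dV k) * coreL n r U k = 0\<^sub>m (r k) (r k)"
  shows "\<forall>k. 1 \<le> k \<and> k \<le> d - 1 \<longrightarrow>
           transpose_mat (V_le n r U dV k) * X_le n r U k = 0\<^sub>m (r k) (r k)"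
proof -
  have main: "k \<le> d - 1 \<Longrightarrow> transpose_mat (X_le n r U k) * X_le n r U k = 1\<^sub>m (r k) \<and>
     transpose_mat (V_le n r U dV k) * X_le n r U k = 0\<^sub>m (r k) (r k)" for k
  proof (induction k)
    case 0 then show ?case using assms(3) by (auto intro!: eq_matI simp: scalar_prod_def)
  next
    case (Suc k)
    then have IH: "transpose_mat (X_le n r U k) * X_le n r U k = 1\<^sub>m (r k)"
      "transpose_mat (V_le n r U dV k) * X_le n r U k = 0\<^sub>m (r k) (r k)" by auto
    define N where "N = dim_row (X_le n r U k)"
    define m where "m = n (Suc k)"
    define X where "X = X_le n r U k"
    define V where "V = V_le n r U dV k"
    define C where "C = coreL n r U (Suc k)"
    define D where "D = coreL n r dV (Suc k)"
    define K where "K = kron (1\<^sub>m m) X"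
    define KV where "KV = kron (1\<^sub>m m) V"
    have X: "X \<in> carrier_mat N (r k)" and V: "V \<in> carrier_mat N (r k)"
      using dims[where r=r, OF assms(3)] unfolding X_def V_def N_def by auto
    have K: "K \<in> carrier_mat (m*N) (m * r k)" and KV: "KV \<in> carrier_mat (m*N) (m * r k)"
      unfolding K_def KV_def using kron_I_carrier X V by auto
    have C: "C \<in> carrier_mat (m * r k) (r (Suc k))" and D: "D \<in> carrier_mat (m * r k) (r (Suc k))"
      unfolding C_def D_def coreL_def unfold_L_def m_def by auto
    have KK: "transpose_mat K * K = 1\<^sub>m (m * r k)"
      unfolding K_def X_def using kron_I_tmult[OF X X] IH kron_I_one X_def by simp
    have VK: "transpose_mat KV * K = 0\<^sub>m (m * r k) (m * r k)"
      unfolding K_def KV_def using kron_I_tmult[OF V X] IH kron_I_zero X_def V_def by simp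
    have hC: "transpose_mat C * C = 1\<^sub>m (r (Suc k))" and hD: "transpose_mat D * C = 0\<^sub>m (r (Suc k)) (r (Suc k))"
      using assms(6,7)[of "Suc k"] Suc.prems unfolding C_def D_def by auto
    have eX: "X_le n r U (Suc k) = K * C" by (simp add: K_def X_def C_def m_def)
    have eV: "V_le n r U dV (Suc k) = KV * C + K * D" by (simp add: K_def KV_def X_def V_def C_def D_def m_def)
    have tKC: "transpose_mat (K * C) = transpose_mat C * transpose_mat K"
      using K C by (simp add: transpose_mult)
    have KT: "transpose_mat K \<in> carrier_mat (m * r k) (m*N)" and CT: "transpose_mat C \<in> carrier_mat (r (Suc k)) (m * r k)"
      using K C by auto
    have "transpose_mat C * transpose_mat K * (K * C) = transpose_mat C * (transpose_mat K * (K * C))"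
      using CT KT K C by (meson assoc_mult_mat mult_carrier_mat)
    also have "\<dots> = transpose_mat C * ((transpose_mat K * K) * C)"
      using KT K C by (simp add: assoc_mult_mat[OF KT K C])
    also have "\<dots> = transpose_mat C * (transpose_mat K * K) * C"
      using CT KT K C by (metis assoc_mult_mat mult_carrier_mat)
    finally have t1: "transpose_mat (K * C) * (K * C) = transpose_mat C * (transpose_mat K * K) * C"
      by (simp add: tKC)
    have "transpose_mat (KV * C + K * D) = transpose_mat (KV * C) + transpose_mat (K * D)"
      by (rule transpose_add) (use K KV C D in auto)
    also have "transpose_mat (KV * C) = transpose_mat C * transpose_mat KV"
      by (rule transpose_mult[OF KV C])
    also have "transpose_mat (K * D) = transpose_mat D * transpose_mat K"
      by (rule transpose_mult[OF K D])
    finally have "transpose_mat (KV * C + K * D) = transpose_mat C * transpose_mat KV + transpose_mat D * transpose_mat K" .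
    then have "transpose_mat (KV * C + K * D) * (K * C) =
       transpose_mat C * transpose_mat KV * (K * C) + transpose_mat D * transpose_mat K * (K * C)"
      using K KV C D by (simp add: add_mult_distrib_mat[where nr="r (Suc k)" and n="m*N" and nc="r (Suc k)"])
    also have "\<dots> = transpose_mat C * (transpose_mat KV * K) * C + transpose_mat D * (transpose_mat K * K) * C"
      using K KV C D by (simp add: assoc3[where a="r (Suc k)" and b="m * r k" and c="m*N" and e="m * r k" and f="r (Suc k)"])
    finally have t2: "transpose_mat (KV * C + K * D) * (K * C) =
       transpose_mat C * (transpose_mat KV * K) * C + transpose_mat D * (transpose_mat K * K) * C" .
    show ?case unfolding eX eV t1 t2 KK VK using C D hC hD by simp
  qed
  show ?thesis using main by auto
qed

end
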